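(* Let $S=\mathbb{C}[x_1,x_2,x_3,x_4]$. Then the ideal $I=\langle h_1,h_4\rangle$ is a prime ideal of $S$.
   Context: $h_a=\sum_{1\le i_1\le\cdots\le i_a\le 4}x_{i_1}\cdots x_{i_a}$ denotes the complete symmetric polynomial of degree $a$ in $x_1,\dots,x_4$. *)

theory Defs
  imports "HOL-Computational_Algebra.Polynomial" Complex_Main
begin

text \<open>The polynomial ring S = C[x1,x2,x3,x4], realised as the iterated univariate
  polynomial ring ((C[x1])[x2])[x3])[x4] (canonically isomorphic to S).\<close>
type_synonym S = "complex poly poly poly poly"

definition x1 :: S where "x1 = [:[:[:[:0, 1:]:]:]:]"
definition x2 :: S where "x2 = [:[:[:0, 1:]:]:]"
definition x3 :: S where "x3 = [:[:0, 1:]:]"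
definition x4 :: S where "x4 = [:0, 1:]"

definition h :: "nat \<Rightarrow> S" where
  "h a = (\<Sum>e1\<le>a. \<Sum>e2\<le>a. \<Sum>e3\<le>a. \<Sum>e4\<le>a.
            if e1 + e2 + e3 + e4 = a then x1 ^ e1 * x2 ^ e2 * x3 ^ e3 * x4 ^ e4 else 0)"

definition ideal_gen :: "'a::comm_ring_1 set \<Rightarrow> 'a set" where
  "ideal_gen G = {\<Sum>g\<in>F. r g * g | F r. finite F \<and> F \<subseteq> G}"

definition is_ideal :: "'a::comm_ring_1 set \<Rightarrow> bool" where
  "is_ideal I \<longleftrightarrow> 0 \<in> I \<and> (\<forall>a\<in>I. \<forall>b\<in>I. a + b \<in> I) \<and> (\<forall>a\<in>I. \<forall>r. r * a \<in> I)"

definition prime_ideal :: "'a::comm_ring_1 set \<Rightarrow> bool" where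
  "prime_ideal I \<longleftrightarrow> is_ideal I \<and> I \<noteq> UNIV \<and> (\<forall>a b. a * b \<in> I \<longrightarrow> a \<in> I \<or> b \<in> I)"

end

theory Submission imports Defs "HOL-Computational_Algebra.Field_as_Ring" "HOL-Computational_Algebra.Polynomial_Factorial" begin

type_synonym R1 = "complex poly"
type_synonym R2 = "complex poly poly"
type_synonym R3 = "complex poly poly poly"

definition ev1 :: "complex \<Rightarrow> R1 \<Rightarrow> complex" where "ev1 a q = poly q a"
definition ev2 :: "complex \<Rightarrow> complex \<Rightarrow> R2 \<Rightarrow> complex" where "ev2 a b q = ev1 a (poly q [:b:])"
definition ev3 :: "complex \<Rightarrow> complex \<Rightarrow> complex \<Rightarrow> R3 \<Rightarrow> complex" where "ev3 a b c q = ev2 a b (poly q [:[:c:]:])"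
definition ev4 :: "complex \<Rightarrow> complex \<Rightarrow> complex \<Rightarrow> complex \<Rightarrow> S \<Rightarrow> complex" where "ev4 a b c d q = ev3 a b c (poly q [:[:[:d:]:]:])"

lemma ev1_hom [simp]:
  "ev1 a (p + q) = ev1 a p + ev1 a q" "ev1 a (p * q) = ev1 a p * ev1 a q"
  "ev1 a (p - q) = ev1 a p - ev1 a q" "ev1 a (- p) = - ev1 a p"
  "ev1 a 0 = 0" "ev1 a 1 = 1" "ev1 a (numeral n) = numeral n" "ev1 a (p ^ k) = ev1 a p ^ k"
  "ev1 a (sum f A) = (\<Sum>x\<in>A. ev1 a (f x))"
  "ev1 a (pCons x p) = x + a * ev1 a p"
  by (simp_all add: ev1_def poly_sum)

lemma ev2_hom [simp]:
  "ev2 a b (p + q) = ev2 a b p + ev2 a b q" "ev2 a b (p * q) = ev2 a b p * ev2 a b q"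
  "ev2 a b (p - q) = ev2 a b p - ev2 a b q" "ev2 a b (- p) = - ev2 a b p"
  "ev2 a b 0 = 0" "ev2 a b 1 = 1" "ev2 a b (numeral n) = numeral n" "ev2 a b (p ^ k) = ev2 a b p ^ k"
  "ev2 a b (sum f A) = (\<Sum>x\<in>A. ev2 a b (f x))"
  "ev2 a b (pCons x p) = ev1 a x + b * ev2 a b p"
  by (simp_all add: ev2_def poly_sum ev1_def)

lemma ev3_hom [simp]:
  "ev3 a b c (p + q) = ev3 a b c p + ev3 a b c q" "ev3 a b c (p * q) = ev3 a b c p * ev3 a b c q"
  "ev3 a b c (p - q) = ev3 a b c p - ev3 a b c q" "ev3 a b c (- p) = - ev3 a b c p"
  "ev3 a b c 0 = 0" "ev3 a b c 1 = 1" "ev3 a b c (numeral n) = numeral n" "ev3 a b c (p ^ k) = ev3 a b c p ^ k"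
  "ev3 a b c (sum f A) = (\<Sum>x\<in>A. ev3 a b c (f x))"
  "ev3 a b c (pCons x p) = ev2 a b x + c * ev3 a b c p"
  by (simp_all add: ev3_def poly_sum ev2_def ev1_def)

lemma ev4_hom [simp]:
  "ev4 a b c d (p + q) = ev4 a b c d p + ev4 a b c d q" "ev4 a b c d (p * q) = ev4 a b c d p * ev4 a b c d q"
  "ev4 a b c d (p - q) = ev4 a b c d p - ev4 a b c d q" "ev4 a b c d (- p) = - ev4 a b c d p"
  "ev4 a b c d 0 = 0" "ev4 a b c d 1 = 1" "ev4 a b c d (numeral n) = numeral n" "ev4 a b c d (p ^ k) = ev4 a b c d p ^ k"
  "ev4 a b c d (sum f A) = (\<Sum>x\<in>A. ev4 a b c d (f x))"
  "ev4 a b c d (pCons x p) = ev3 a b c x + d * ev4 a b c d p"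
  by (simp_all add: ev4_def poly_sum ev3_def ev2_def ev1_def)

lemma ev_x [simp]: "ev4 a b c d x1 = a" "ev4 a b c d x2 = b" "ev4 a b c d x3 = c" "ev4 a b c d x4 = d"
  by (simp_all add: x1_def x2_def x3_def x4_def)

lemma ev4_h4: "ev4 a b c d (h 4) = (\<Sum>e1\<le>4. \<Sum>e2\<le>4. \<Sum>e3\<le>4. \<Sum>e4\<le>(4::nat).
            if e1 + e2 + e3 + e4 = 4 then a ^ e1 * b ^ e2 * c ^ e3 * d ^ e4 else 0)"
  by (simp add: h_def if_distrib cong: if_cong)

lemma sum4: "(\<Sum>i\<le>(4::nat). f i) = f 0 + f 1 + f 2 + f 3 + f 4"
  by (simp add: eval_nat_numeral atMost_Suc add.commute add.left_commute)

lemma ev4_h4': "ev4 a b c d (h 4) = a^4+b^4+c^4+d^4 + a^3*b+a^3*c+a^3*d+b^3*a+b^3*c+b^3*d+c^3*a+c^3*b+c^3*d+d^3*a+d^3*b+d^3*c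
   + a^2*b^2+a^2*c^2+a^2*d^2+b^2*c^2+b^2*d^2+c^2*d^2 + a^2*b*c+a^2*b*d+a^2*c*d+b^2*a*c+b^2*a*d+b^2*c*d+c^2*a*b+c^2*a*d+c^2*b*d
   + d^2*a*b+d^2*a*c+d^2*b*c + a*b*c*d"
  unfolding ev4_h4 by (simp only: sum4) (simp add: algebra_simps)

lemma key_id: "ev4 a b c' (-(a+b+c')) (h 4) = c^4 + (3*a^2+4*a*b+3*b^2)/2*c^2 + (9*a^4+8*a^3*b+14*a^2*b^2+8*a*b^3+9*b^4)/16"
  if "c' = c - (a+b)/2"
  unfolding ev4_h4' that by (simp add: field_simps power2_eq_square power3_eq_cube power4_eq_xxxx)

lemma ev3_poly: "ev3 a b c (poly (H::S) t) = ev4 a b c (ev3 a b c t) H"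
  by (induct H) (simp_all)

lemma ev2_poly: "ev2 a b (poly (H::R3) t) = ev3 a b (ev2 a b t) H"
  by (induct H) (simp_all)

lemma ev3_pcompose: "ev3 a b c (pcompose H L) = ev3 a b (ev3 a b c L) H"
  unfolding ev3_def[of a b c] poly_pcompose ev2_poly ..

lemma inf_eq: fixes P Q :: "'a::idom poly"
  assumes "infinite A" "\<forall>x\<in>A. poly P x = poly Q x" shows "P = Q"
proof (rule ccontr)
  assume "P \<noteq> Q"
  hence "P - Q \<noteq> 0" by simp
  hence "finite {x. poly (P - Q) x = 0}" by (rule poly_roots_finite)
  moreover have "A \<subseteq> {x. poly (P - Q) x = 0}" using assms(2) by auto
  ultimately have "finite A" using finite_subset by metis
  thus False using assms(1) by contradiction
qed

lemma inf_const: "infinite (range (\<lambda>c::'a::{idom,ring_char_0}. [:c:]))"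
proof -
  have i: "inj (\<lambda>c::'a. [:c:])" by (auto intro: injI)
  show ?thesis
  proof
    assume "finite (range (\<lambda>c::'a. [:c:]))"
    hence "finite (UNIV::'a set)" using i by (rule finite_imageD)
    thus False using infinite_UNIV_char_0 by contradiction
  qed
qed

lemma ev2_inj: assumes "\<And>a b. ev2 a b P = ev2 a b Q" shows "P = Q"
proof (rule inf_eq[OF inf_const], safe)
  fix b :: complex
  have "poly (poly P [:b:]) = poly (poly Q [:b:])" using assms by (auto simp: ev2_def ev1_def)
  thus "poly P [:b:] = poly Q [:b:]" by (simp add: poly_eq_poly_eq_iff)
qed

lemma ev3_inj: assumes "\<And>a b c. ev3 a b c P = ev3 a b c Q" shows "P = Q"
proof -
  have "infinite (range (\<lambda>c::complex. [:[:c:]:]))"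
  proof -
    have i: "inj (\<lambda>c::complex. [:[:c:]:])" by (auto intro: injI)
    show ?thesis
    proof
      assume "finite (range (\<lambda>c::complex. [:[:c:]:]))"
      hence "finite (UNIV::complex set)" using i by (rule finite_imageD)
      thus False using infinite_UNIV_char_0 by contradiction
    qed
  qed
  moreover have "\<forall>x\<in>range (\<lambda>c::complex. [:[:c:]:]). poly P x = poly Q x"
  proof safe
    fix c :: complex
    show "poly P [:[:c:]:] = poly Q [:[:c:]:]" by (rule ev2_inj) (use assms in \<open>simp add: ev3_def\<close>)
  qed
  ultimately show ?thesis by (rule inf_eq)
qed

definition gam :: R3 where "gam = [:[:[:0,1:], 1:], 1:]"
definition sig :: R2 where "sig = [:[:0,-1/2:], [:-1/2:]:]"
definition pR :: R2 where "pR = [:[:0,0,3/2:], [:0,2:], [:3/2:]:]"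
definition sR :: R2 where "sR = [:[:0,0,0,0,9/16:], [:0,0,0,1/2:], [:0,0,7/8:], [:0,1/2:], [:9/16:]:]"
definition E :: R3 where "E = [:sR, 0, pR, 0, 1:]"
definition Fp :: R3 where "Fp = poly (h 4) (- gam)"

lemma F_shift: "pcompose Fp [:sig, 1:] = E"
proof (rule ev3_inj)
  fix a b c
  have 1: "ev3 a b c [:sig,1:] = c - (a+b)/2" by (simp add: sig_def field_simps)
  have 2: "ev3 a b c' (-gam) = -(a+b+c')" for c' by (simp add: gam_def)
  have 3: "ev3 a b c E = c^4 + (3*a^2+4*a*b+3*b^2)/2*c^2 + (9*a^4+8*a^3*b+14*a^2*b^2+8*a*b^3+9*b^4)/16"
    by (simp add: E_def pR_def sR_def field_simps power2_eq_square power3_eq_cube power4_eq_xxxx)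
  show "ev3 a b c (pcompose Fp [:sig, 1:]) = ev3 a b c E"
    unfolding ev3_pcompose Fp_def ev3_poly 1 2 3 by (rule key_id) simp
qed

definition DR :: R2 where "DR = [:0, [:0,0,0,4:], [:0,0,5:], [:0,4:]:]"

lemma DR_eq: "pR*pR - (sR+sR+sR+sR) = DR"
  by (rule ev2_inj) (simp add: pR_def sR_def DR_def field_simps power2_eq_square power3_eq_cube power4_eq_xxxx)

lemma DR_nosq: "q^2 \<noteq> DR" for q :: R2
proof
  assume h: "q^2 = DR"
  have "DR \<noteq> 0" by (simp add: DR_def)
  hence "q \<noteq> 0" using h by auto
  hence "degree (q^2) = 2 * degree q" by (simp add: degree_power_eq)
  moreover have "degree DR = 3" by (simp add: DR_def)
  ultimately have "2 * degree q = 3" using h by simp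
  thus False by presburger
qed

lemma deg2_form: "degree p \<le> 2 \<Longrightarrow> p = [:coeff p 0, coeff p 1, coeff p 2:]"
  by (rule poly_eqI) (auto simp: coeff_pCons coeff_eq_0 numeral_2_eq_2 split: nat.split)

lemma sq3: "[:a,b,c:] * [:a,b,c:] = [:a*a, a*b+b*a, a*c+b*b+c*a, b*c+c*b, c*c::'a::comm_ring_1:]"
  by (simp add: algebra_simps)

lemma sR_nosq: "q^2 \<noteq> sR" for q :: R2
proof
  assume h: "q^2 = sR"
  have "sR \<noteq> 0" by (simp add: sR_def)
  hence "q \<noteq> 0" using h by auto
  hence "degree (q^2) = 2 * degree q" by (simp add: degree_power_eq)
  moreover have "degree sR = 4" by (simp add: sR_def)
  ultimately have "2 * degree q = 4" using h by simp
  hence "degree q = 2" by simp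
  hence "q = [:coeff q 0, coeff q 1, coeff q 2:]" using deg2_form[of q] by simp
  then obtain q0 q1 q2 where qq: "q = [:q0,q1,q2:]" by blast
  have e: "q0*q0 = [:0,0,0,0,9/16:]" "q0*q1+q1*q0 = [:0,0,0,1/2:]" "q0*q2 + q1*q1 + q2*q0 = [:0,0,7/8:]"
     "q1*q2+q2*q1 = [:0,1/2:]" "q2*q2 = [:9/16:]"
    using h unfolding qq sR_def power2_eq_square sq3 pCons_eq_iff by blast+
  define Q0 where "Q0 = poly q0 1"
  define Q1 where "Q1 = poly q1 1"
  define Q2 where "Q2 = poly q2 1"
  have f: "Q0*Q0 = 9/16" "2*Q0*Q1 = 1/2" "2*Q0*Q2 + Q1*Q1 = 7/8" "2*Q1*Q2 = 1/2" "Q2*Q2 = 9/16"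
    using arg_cong[OF e(1), of "\<lambda>x. poly x 1"] arg_cong[OF e(2), of "\<lambda>x. poly x 1"]
      arg_cong[OF e(3), of "\<lambda>x. poly x 1"] arg_cong[OF e(4), of "\<lambda>x. poly x 1"]
      arg_cong[OF e(5), of "\<lambda>x. poly x 1"]
    by (simp_all add: Q0_def Q1_def Q2_def algebra_simps)
  have "Q0*Q1 = (2*Q0*Q1)/2" by simp
  hence p01: "Q0*Q1 = 1/4" using f(2) by simp
  have "Q1*Q2 = (2*Q1*Q2)/2" by simp
  hence p12: "Q1*Q2 = 1/4" using f(4) by simp
  have "Q1 \<noteq> 0" using p01 by auto
  moreover have "Q1 * (Q0 - Q2) = 0"
  proof -
    have "Q1 * (Q0 - Q2) = Q0*Q1 - Q1*Q2" by (simp add: algebra_simps)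
    also have "\<dots> = 0" by (simp only: p01 p12) simp
    finally show ?thesis .
  qed
  ultimately have "Q0 = Q2" by simp
  hence "2*(Q0*Q0) + Q1*Q1 = 7/8" using f(3) by (simp add: mult.assoc)
  hence "Q1*Q1 = 7/8 - 2*(Q0*Q0)" by (simp add: eq_diff_eq add.commute)
  hence "Q1*Q1 = -1/4" by (simp only: f(1)) simp
  moreover have "(Q0*Q1)*(Q0*Q1) = (Q0*Q0)*(Q1*Q1)" by (simp add: ac_simps)
  ultimately have "(1/4) * (1/4) = (9/16) * (-1/4::complex)" using f(1) p01 by simp
  thus False by (simp add: complex_eq_iff)
qed

lemma E_noroot: "poly E l \<noteq> 0"
proof
  assume "poly E l = 0"
  hence "sR + pR * l^2 + l^4 = 0" by (simp add: E_def algebra_simps power2_eq_square power4_eq_xxxx)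
  moreover have "(2*l^2 + pR)^2 = DR + 4*(sR + pR * l^2 + l^4)" unfolding DR_eq[symmetric]
    by (simp add: power2_eq_square power4_eq_xxxx algebra_simps)
  ultimately have "(2*l^2 + pR)^2 = DR" by simp
  thus False using DR_nosq by blast
qed

lemma deg1_root: fixes A B :: R3
  assumes "degree A = 1" "lead_coeff A * b = 1" shows "poly A (- coeff A 0 * b) = 0"
proof -
  have "A = [:coeff A 0, coeff A 1:]" by (rule poly_eqI) (use assms(1) in \<open>auto simp: coeff_pCons coeff_eq_0 split: nat.split\<close>)
  hence "poly A x = coeff A 0 + x * coeff A 1" for x by (metis poly_pCons mult_zero_right add_0_right poly_0)
  hence "poly A (- coeff A 0 * b) = coeff A 0 - coeff A 0 * (coeff A 1 * b)"
    by (simp add: algebra_simps)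
  thus ?thesis using assms by simp
qed

lemma prod22: "[:be,al,1:] * [:de,al',1:] = [:be*de, be*al'+al*de, be+al*al'+de, al+al', 1::'a::comm_ring_1:]"
  by (simp add: algebra_simps)

lemma E_irr_split: fixes A B :: R3 assumes AB: "A * B = E" shows "is_unit A \<or> is_unit B"
proof -
  have Enz: "E \<noteq> 0" by (simp add: E_def)
  hence nz: "A \<noteq> 0" "B \<noteq> 0" using AB by auto
  have dE: "degree E = 4" by (simp add: E_def)
  have dg: "degree A + degree B = 4" using AB nz dE degree_mult_eq by metis
  have lE: "lead_coeff E = 1" by (simp add: E_def)
  have lc: "lead_coeff A * lead_coeff B = 1" using AB lE lead_coeff_mult by metis
  have lc': "lead_coeff B * lead_coeff A = 1" using lc by (simp add: mult.commute)
  have unit0: "is_unit P" if "degree P = 0" "lead_coeff P * c = 1" for P :: R3 and c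
  proof -
    have "P = [:coeff P 0:]" using that(1) by (simp add: degree_0_id)
    hence "P * [:c:] = [:coeff P 0:] * [:c:]" by simp
    also have "\<dots> = [:coeff P 0 * c:]" by simp
    also have "coeff P 0 = lead_coeff P" using that(1) by simp
    finally have "P * [:c:] = 1" using that(2) by (simp add: one_pCons)
    thus ?thesis by (metis dvdI)
  qed
  consider "degree A = 0" | "degree B = 0" | "degree A = 1" | "degree B = 1" | "degree A = 2" "degree B = 2"
    using dg by linarith
  thus ?thesis
  proof cases
    case 1 thus ?thesis using unit0 lc by blast
  next
    case 2 thus ?thesis using unit0 lc' by blast
  next
    case 3
    have "poly E (- coeff A 0 * lead_coeff B) = 0" unfolding AB[symmetric] poly_mult using deg1_root[OF 3 lc] by simp
    thus ?thesis using E_noroot by blast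
  next
    case 4
    have "poly E (- coeff B 0 * lead_coeff A) = 0" unfolding AB[symmetric] poly_mult using deg1_root[OF 4 lc'] by simp
    thus ?thesis using E_noroot by blast
  next
    case 5
    define A1 where "A1 = smult (lead_coeff B) A"
    define B1 where "B1 = smult (lead_coeff A) B"
    have P: "A1 * B1 = E" unfolding A1_def B1_def using AB lc by (simp add: mult.commute)
    have "degree A1 \<le> 2" "degree B1 \<le> 2" unfolding A1_def B1_def using 5 by (auto intro: order.trans[OF degree_smult_le])
    hence "A1 = [:coeff A1 0, coeff A1 1, coeff A1 2:]" "B1 = [:coeff B1 0, coeff B1 1, coeff B1 2:]"
      using deg2_form by blast+
    moreover have "coeff A1 2 = 1" "coeff B1 2 = 1" unfolding A1_def B1_def using 5 lc lc' by simp_all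
    ultimately obtain be al de al' where A1e: "A1 = [:be, al, 1:]" and B1e: "B1 = [:de, al', 1:]" by metis
    have eq: "be * de = sR" "be * al' + al * de = 0" "be + al * al' + de = pR" "al + al' = 0"
      using P unfolding A1e B1e E_def prod22 pCons_eq_iff by simp_all
    have "al' = - al" using eq(4) by (simp add: eq_neg_iff_add_eq_0 add.commute)
    hence "al * (de - be) = 0" using eq(2) by (simp add: algebra_simps)
    hence "al = 0 \<or> de = be" by simp
    thus ?thesis
    proof
      assume "al = 0"
      hence "be + de = pR" using eq(3) by simp
      have "(be - de)^2 = (be+de)*(be+de) - (be*de+be*de+be*de+be*de)" by (simp add: power2_eq_square algebra_simps)
      hence "(be - de)^2 = DR" unfolding DR_eq[symmetric] using eq(1) \<open>be + de = pR\<close> by simp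
      thus ?thesis using DR_nosq by blast
    next
      assume "de = be"
      hence "be^2 = sR" using eq(1) by (simp add: power2_eq_square)
      thus ?thesis using sR_nosq by blast
    qed
  qed
qed

lemma unit_deg0: "is_unit (p::R3) \<Longrightarrow> degree p = 0"
  by (auto simp: is_unit_poly_iff)

lemma Fp_irr: "irreducible Fp"
proof (rule irreducibleI)
  let ?L = "[:sig, 1:] :: R3"
  have dL: "degree ?L = 1" by simp
  have Enz: "E \<noteq> 0" by (simp add: E_def)
  show Fnz: "Fp \<noteq> 0" using F_shift Enz by auto
  have "degree E = degree Fp * degree ?L" unfolding F_shift[symmetric] by (rule degree_pcompose)
  hence "degree Fp = 4" using dL by (simp add: E_def)
  thus "\<not> is_unit Fp" using unit_deg0 by auto
  fix A B assume AB: "Fp = A * B"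
  have "pcompose A ?L * pcompose B ?L = E" unfolding F_shift[symmetric] AB pcompose_mult ..
  hence "is_unit (pcompose A ?L) \<or> is_unit (pcompose B ?L)" by (rule E_irr_split)
  moreover have "is_unit C" if "is_unit (pcompose C ?L)" for C :: R3
  proof -
    have "degree C = 0" using unit_deg0[OF that] dL by (simp add: degree_pcompose)
    hence C: "C = [:coeff C 0:]" by (simp add: degree_0_id)
    hence "pcompose C ?L = C" by (metis pcompose_const)
    thus ?thesis using that by simp
  qed
  ultimately show "is_unit A \<or> is_unit B" by blast
qed

lemma Fp_prime: "prime_elem Fp"
  using Fp_irr by (rule irreducible_imp_prime_elem)

lemma h1_eq: "h 1 = [:gam, 1:]"
  by (simp add: h_def x1_def x2_def x3_def x4_def gam_def)

lemma h1_eq': "h (Suc 0) = [:gam, 1:]" using h1_eq by simp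

lemma dvd_sub: "[:gam, 1:] dvd (P - [:poly P (- gam):])"
proof -
  have "poly (P - [:poly P (- gam):]) (- gam) = 0" by simp
  thus ?thesis using poly_eq_0_iff_dvd[of "P - [:poly P (- gam):]" "- gam"] by simp
qed

lemma sub_eq: "a - b = (c::'a::ab_group_add) \<Longrightarrow> a = c + b"
  by (simp add: diff_eq_eq)

lemma aux_alg: fixes P X Q1 Q2 K C F H4 :: "'a::comm_ring_1"
  assumes "P = X * Q1 + K" "K = C * F" "H4 = X * Q2 + F"
  shows "P = (Q1 - C * Q2) * X + C * H4"
  using assms by (simp add: algebra_simps)

lemma mem_iff: "P \<in> ideal_gen {h 1, h 4} \<longleftrightarrow> Fp dvd poly P (- gam)"
proof
  assume "P \<in> ideal_gen {h 1, h 4}"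
  then obtain G r where G: "finite G" "G \<subseteq> {h 1, h 4}" and P: "P = (\<Sum>g\<in>G. r g * g)"
    unfolding ideal_gen_def by blast
  have "poly P (- gam) = (\<Sum>g\<in>G. poly (r g) (- gam) * poly g (- gam))" unfolding P by (simp add: poly_sum)
  also have "Fp dvd \<dots>"
  proof (rule dvd_sum)
    fix g assume "g \<in> G"
    hence "g = h 1 \<or> g = h 4" using G by auto
    thus "Fp dvd poly (r g) (- gam) * poly g (- gam)"
      by (auto simp: h1_eq h1_eq' Fp_def)
  qed
  finally show "Fp dvd poly P (- gam)" .
next
  assume "Fp dvd poly P (- gam)"
  then obtain c where c: "poly P (- gam) = Fp * c" by (auto elim: dvdE)
  obtain Q1 where Q1: "P - [:poly P (- gam):] = [:gam, 1:] * Q1" using dvd_sub[of P] unfolding dvd_def by blast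
  obtain Q2 where Q2: "h 4 - [:poly (h 4) (- gam):] = [:gam, 1:] * Q2" using dvd_sub[of "h 4"] unfolding dvd_def by blast
  have ne: "h 1 \<noteq> h 4"
  proof
    assume "h 1 = h 4"
    hence "poly (h 1) (- gam) = Fp" by (simp add: Fp_def)
    moreover have "poly (h 1) (- gam) = 0" by (simp add: h1_eq h1_eq')
    ultimately show False using Fp_irr by (simp add: irreducible_def)
  qed
  define r where "r = (\<lambda>g. if g = h 1 then Q1 - [:c:] * Q2 else [:c:])"
  have e1: "P = [:gam, 1:] * Q1 + [:poly P (- gam):]" using sub_eq[OF Q1] .
  have e2: "h 4 = [:gam, 1:] * Q2 + [:Fp:]" using sub_eq[OF Q2] unfolding Fp_def .
  have e3: "[:poly P (- gam):] = [:c:] * [:Fp:]" unfolding c by (simp add: mult.commute)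
  have "P = (Q1 - [:c:] * Q2) * h 1 + [:c:] * h 4"
    unfolding h1_eq using aux_alg[OF e1 e3 e2] .
  moreover have "r (h 1) = Q1 - [:c:] * Q2" by (simp add: r_def)
  moreover have "r (h 4) = [:c:]" using ne by (simp add: r_def)
  ultimately have eP: "P = r (h 1) * h 1 + r (h 4) * h 4" by simp
  have "(\<Sum>g\<in>{h 1, h 4}. r g * g) = r (h 1) * h 1 + r (h 4) * h 4"
    using ne by (subst sum.insert) auto
  hence eP': "P = (\<Sum>g\<in>{h 1, h 4}. r g * g)" using eP by simp
  show "P \<in> ideal_gen {h 1, h 4}" unfolding ideal_gen_def mem_Collect_eq
    by (rule exI[of _ "{h 1, h 4}"], rule exI[of _ r]) (intro conjI eP', auto)
qed

theorem mainTheorem10: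
  shows "prime_ideal (ideal_gen {h 1, h 4})"
  unfolding prime_ideal_def is_ideal_def
proof (intro conjI ballI allI impI)
  show "0 \<in> ideal_gen {h 1, h 4}" by (simp only: mem_iff) simp
next
  fix a b assume "a \<in> ideal_gen {h 1, h 4}" "b \<in> ideal_gen {h 1, h 4}"
  thus "a + b \<in> ideal_gen {h 1, h 4}" by (simp only: mem_iff) simp
next
  fix a r assume "a \<in> ideal_gen {h 1, h 4}"
  thus "r * a \<in> ideal_gen {h 1, h 4}" by (simp only: mem_iff) simp
next
  show "ideal_gen {h 1, h 4} \<noteq> UNIV"
  proof
    assume "ideal_gen {h 1, h 4} = UNIV"
    hence "Fp dvd poly 1 (- gam)" using mem_iff[of 1] by (simp only: UNIV_I)
    hence "Fp dvd 1" by simp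
    thus False using Fp_irr by (simp add: irreducible_def)
  qed
next
  fix a b assume "a * b \<in> ideal_gen {h 1, h 4}"
  hence "Fp dvd poly a (- gam) * poly b (- gam)" by (simp only: mem_iff poly_mult)
  thus "a \<in> ideal_gen {h 1, h 4} \<or> b \<in> ideal_gen {h 1, h 4}"
    using Fp_prime by (simp only: mem_iff prime_elem_dvd_mult_iff)
qed
end
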